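(* Let $P$ be a Banach measure on $\mathbf{N}$. Define $g:\mathbf{N}\times\mathbf{N}\to\mathbb{R}$ by $g(\omega_1,\omega_2)=1$ if $\xi_{\omega_1}(\omega_2)\equiv 0\pmod 2$ and $g(\omega_1,\omega_2)=0$ otherwise. Assume the Collatz conjecture holds. Then $g\in\mathcal{G}$, i.e. $$\int_{\mathbf{N}}\Big(\int_{\mathbf{N}} g(\omega_1,\omega_2)\,dP(\omega_2)\Big)dP(\omega_1)=\int_{\mathbf{N}}\Big(\int_{\mathbf{N}} g(\omega_1,\omega_2)\,dP(\omega_1)\Big)dP(\omega_2)$$ (both being equal to $2/3$).
   Context: $\mathbf{N}=\{1,2,3,\dots\}$. A Banach measure is a finitely additive probability measure $P$ defined on all subsets of $\mathbf{N}$ that is shift-invariant: $P(X+1)=P(X)$ for all $X\subseteq\mathbf{N}$, where $X+1=\{x+1:x\in X\}$. For bounded $f:\mathbf{N}\to\mathbb{R}$, $\int f\,dP$ is the integral with respect to the finitely additive measure $P$ (the unique positive linear functional on bounded functions with $\int 1_A\,dP=P(A)$). $\mathcal{G}$ denotes the class of functions $f:\mathbf{N}\times\mathbf{N}\to\mathbb{R}$ for which the two iterated integrals $\int(\int f(\omega_1,\omega_2)\,dP(\omega_2))dP(\omega_1)$ and $\int(\int f(\omega_1,\omega_2)\,dP(\omega_1))dP(\omega_2)$ are equal. The Collatz map $\xi:\mathbf{N}\to\mathbf{N}$ is $\xi(\omega)=\omega/2$ if $\omega$ is even and $\xi(\omega)=3\omega+1$ if $\omega$ is odd; $\xi_n$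 is its $n$-fold iterate. The Collatz conjecture is the statement: for every $\omega\in\mathbf{N}$ there exists $n$ with $\xi_n(\omega)=1$. *)

theory Defs
  imports Main "HOL-Library.Indicator_Function"
begin

text \<open>The paper's N = {1,2,3,...} is modelled inside nat; the point 0 is a
  null point (P {0} = 0, which is in fact implied by the other axioms), so a
  set function on subsets of nat corresponds exactly to one on subsets of N.\<close>

definition banach_measure :: "(nat set \<Rightarrow> real) \<Rightarrow> bool" where
  "banach_measure P \<longleftrightarrow>
     (\<forall>A. 0 \<le> P A) \<and> P UNIV = 1 \<and> P {0} = 0 \<and>
     (\<forall>A B. A \<inter> B = {} \<longrightarrow> P (A \<union> B) = P A + P B) \<and>
     (\<forall>X. P ((\<lambda>x. x + 1) ` X) = P X)"

definition fa_bounded :: "(nat \<Rightarrow> real) \<Rightarrow> bool" where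
  "fa_bounded f \<longleftrightarrow> (\<exists>B. \<forall>x. \<bar>f x\<bar> \<le> B)"

text \<open>The integral w.r.t. a finitely additive measure: the unique positive
  linear functional on bounded functions with value P A on indicators
  (normalised to 0 on unbounded functions so that it is a unique total function).\<close>

definition fa_integral :: "(nat set \<Rightarrow> real) \<Rightarrow> (nat \<Rightarrow> real) \<Rightarrow> real" where
  "fa_integral P = (THE L.
      (\<forall>f g. fa_bounded f \<longrightarrow> fa_bounded g \<longrightarrow> L (\<lambda>x. f x + g x) = L f + L g) \<and>
      (\<forall>c f. fa_bounded f \<longrightarrow> L (\<lambda>x. c * f x) = c * L f) \<and>
      (\<forall>f. fa_bounded f \<longrightarrow> (\<forall>x. 0 \<le> f x) \<longrightarrow> 0 \<le> L f) \<and>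
      (\<forall>A. L (indicator A) = P A) \<and>
      (\<forall>f. \<not> fa_bounded f \<longrightarrow> L f = 0))"

definition collatz :: "nat \<Rightarrow> nat" where
  "collatz n = (if even n then n div 2 else 3 * n + 1)"

definition collatz_conjecture :: bool where
  "collatz_conjecture \<longleftrightarrow> (\<forall>w::nat. w \<ge> 1 \<longrightarrow> (\<exists>n. (collatz ^^ n) w = 1))"

definition collatz_g :: "nat \<Rightarrow> nat \<Rightarrow> real" where
  "collatz_g w1 w2 = (if even ((collatz ^^ w1) w2) then 1 else 0)"

end

theory Submission
  imports Defs
begin

lemma eq_by_eps:
  fixes x y :: real
  assumes "\<And>e. e > 0 \<Longrightarrow> \<bar>x - y\<bar> \<le> e"
  shows "x = y"
proof (rule ccontr)
  assume "x \<noteq> y"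
  then have "\<bar>x - y\<bar> / 2 > 0" by simp
  from assms[OF this] have "\<bar>x - y\<bar> \<le> \<bar>x - y\<bar> / 2" .
  with \<open>x \<noteq> y\<close> show False by simp
qed

locale fam =
  fixes P :: "nat set \<Rightarrow> real"
  assumes nonneg: "0 \<le> P A"
    and add: "A \<inter> B = {} \<Longrightarrow> P (A \<union> B) = P A + P B"
    and univ: "P UNIV = 1"
begin

lemma P_empty: "P {} = 0"
  using add[of "{}" "{}"] by simp

lemma P_mono: "A \<subseteq> B \<Longrightarrow> P A \<le> P B"
proof -
  assume "A \<subseteq> B"
  then have "B = A \<union> (B - A)" by blast
  then have "P B = P A + P (B - A)" using add[of A "B - A"] by (metis Diff_disjoint)
  then show ?thesis using nonneg[of "B - A"] by simp
qed

lemma P_UN: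
  assumes "finite Z" "disjoint_family_on A Z"
  shows "P (\<Union>z\<in>Z. A z) = (\<Sum>z\<in>Z. P (A z))"
  using assms
proof (induction Z rule: finite_induct)
  case empty then show ?case by (simp add: P_empty)
next
  case (insert z Z)
  have d: "disjoint_family_on A Z" using insert.prems by (auto simp: disjoint_family_on_def)
  have "A z \<inter> (\<Union>y\<in>Z. A y) = {}"
    using insert.prems insert.hyps(2) by (fastforce simp: disjoint_family_on_def)
  then have "P (\<Union>y\<in>insert z Z. A y) = P (A z) + P (\<Union>y\<in>Z. A y)"
    using add by simp
  then show ?case using insert.IH[OF d] insert.hyps by simp
qed

definition simple :: "(nat \<Rightarrow> real) \<Rightarrow> bool" where "simple s \<longleftrightarrow> finite (range s)"
definition I :: "(nat \<Rightarrow> real) \<Rightarrow> real" where "I s = (\<Sum>y\<in>range s. y * P (s -` {y}))"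

lemma I_gen:
  fixes h :: "nat \<Rightarrow> 'a" and \<phi> :: "'a \<Rightarrow> real"
  assumes "finite Z" "range h \<subseteq> Z"
  shows "I (\<phi> \<circ> h) = (\<Sum>z\<in>Z. \<phi> z * P (h -` {z}))"
proof -
  have "(\<Sum>z\<in>Z. \<phi> z * P (h -` {z})) = (\<Sum>y\<in>\<phi> ` Z. \<Sum>z\<in>{z\<in>Z. \<phi> z = y}. \<phi> z * P (h -` {z}))"
    using assms(1) by (rule sum.image_gen)
  also have "\<dots> = (\<Sum>y\<in>\<phi> ` Z. y * P ((\<phi> \<circ> h) -` {y}))"
  proof (rule sum.cong[OF refl])
    fix y assume "y \<in> \<phi> ` Z"
    have "(\<Sum>z\<in>{z\<in>Z. \<phi> z = y}. \<phi> z * P (h -` {z})) = y * (\<Sum>z\<in>{z\<in>Z. \<phi> z = y}. P (h -` {z}))"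
      by (simp add: sum_distrib_left)
    also have "(\<Sum>z\<in>{z\<in>Z. \<phi> z = y}. P (h -` {z})) = P (\<Union>z\<in>{z\<in>Z. \<phi> z = y}. h -` {z})"
      by (rule P_UN[symmetric]) (use assms(1) in \<open>auto simp: disjoint_family_on_def\<close>)
    also have "(\<Union>z\<in>{z\<in>Z. \<phi> z = y}. h -` {z}) = (\<phi> \<circ> h) -` {y}"
      using assms(2) by (auto simp: image_subset_iff)
    finally show "(\<Sum>z\<in>{z\<in>Z. \<phi> z = y}. \<phi> z * P (h -` {z})) = y * P ((\<phi> \<circ> h) -` {y})" .
  qed
  also have "\<dots> = I (\<phi> \<circ> h)"
    unfolding I_def
  proof (rule sum.mono_neutral_right)
    show "finite (\<phi> ` Z)" using assms(1) by simp
    show "range (\<phi> \<circ> h) \<subseteq> \<phi> ` Z" using assms(2) by auto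
    show "\<forall>i\<in>\<phi> ` Z - range (\<phi> \<circ> h). i * P ((\<phi> \<circ> h) -` {i}) = 0"
    proof
      fix i assume "i \<in> \<phi> ` Z - range (\<phi> \<circ> h)"
      then have "(\<phi> \<circ> h) -` {i} = {}" by (auto simp: vimage_def) (metis rangeI)
      then show "i * P ((\<phi> \<circ> h) -` {i}) = 0" by (simp add: P_empty)
    qed
  qed
  finally show ?thesis ..
qed

lemma simple_add: "simple s \<Longrightarrow> simple t \<Longrightarrow> simple (\<lambda>x. s x + t x)"
  unfolding simple_def
  by (rule finite_subset[of _ "(\<lambda>(a,b). a + b) ` (range s \<times> range t)"]) auto

lemma simple_scale: "simple s \<Longrightarrow> simple (\<lambda>x. c * s x)"
  unfolding simple_def
  by (rule finite_subset[of _ "(\<lambda>a. c * a) ` range s"]) auto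

lemma simple_const: "simple (\<lambda>x. c)"
  unfolding simple_def by simp

lemma simple_ind: "simple (indicator A)"
  unfolding simple_def by (rule finite_subset[of _ "{0,1}"]) (auto simp: indicator_def)

lemma I_add:
  assumes "simple s" "simple t"
  shows "I (\<lambda>x. s x + t x) = I s + I t"
proof -
  let ?h = "\<lambda>x. (s x, t x)"
  let ?Z = "range s \<times> range t"
  have fZ: "finite ?Z" using assms by (simp add: simple_def)
  have hZ: "range ?h \<subseteq> ?Z" by auto
  have "I (\<lambda>x. s x + t x) = I ((\<lambda>p. fst p + snd p) \<circ> ?h)" by (simp add: o_def)
  also have "\<dots> = (\<Sum>p\<in>?Z. (fst p + snd p) * P (?h -` {p}))" by (rule I_gen[OF fZ hZ])
  also have "\<dots> = (\<Sum>p\<in>?Z. fst p * P (?h -` {p})) + (\<Sum>p\<in>?Z. snd p * P (?h -` {p}))"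
    by (simp add: distrib_right sum.distrib)
  also have "(\<Sum>p\<in>?Z. fst p * P (?h -` {p})) = I (fst \<circ> ?h)" by (rule I_gen[OF fZ hZ, symmetric])
  also have "(\<Sum>p\<in>?Z. snd p * P (?h -` {p})) = I (snd \<circ> ?h)" by (rule I_gen[OF fZ hZ, symmetric])
  finally show ?thesis by (simp add: o_def)
qed

lemma I_scale:
  assumes "simple s"
  shows "I (\<lambda>x. c * s x) = c * I s"
proof -
  have "I (\<lambda>x. c * s x) = I ((\<lambda>y. c * y) \<circ> s)" by (simp add: o_def)
  also have "\<dots> = (\<Sum>y\<in>range s. c * y * P (s -` {y}))"
    by (rule I_gen) (use assms in \<open>auto simp: simple_def\<close>)
  also have "\<dots> = c * I s" by (simp add: I_def sum_distrib_left mult.assoc)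
  finally show ?thesis .
qed

lemma I_nonneg: "(\<And>x. 0 \<le> s x) \<Longrightarrow> 0 \<le> I s"
  unfolding I_def by (rule sum_nonneg) (auto intro!: mult_nonneg_nonneg nonneg)

lemma I_ind: "I (indicator A) = P A"
proof -
  have "indicator A = (\<lambda>b. if b then (1::real) else 0) \<circ> (\<lambda>x. x \<in> A)"
    by (auto simp: indicator_def fun_eq_iff)
  then have "I (indicator A) = (\<Sum>b\<in>(UNIV::bool set). (if b then (1::real) else 0) * P ((\<lambda>x. x \<in> A) -` {b}))"
    by (simp add: I_gen)
  also have "\<dots> = P A" by (simp add: UNIV_bool vimage_def)
  finally show ?thesis .
qed

lemma I_const: "I (\<lambda>x. c) = c"
  unfolding I_def by (simp add: univ)

lemma I_mono:
  assumes "simple s" "simple t" "\<And>x. s x \<le> t x"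
  shows "I s \<le> I t"
proof -
  have sd: "simple (\<lambda>x. t x + -1 * s x)" using assms by (intro simple_add simple_scale)
  have "I t = I (\<lambda>x. s x + (t x + -1 * s x))" by simp
  also have "\<dots> = I s + I (\<lambda>x. t x + -1 * s x)" using assms(1) sd by (rule I_add)
  finally show ?thesis using I_nonneg[of "\<lambda>x. t x + -1 * s x"] assms(3) by force
qed

end

context fam
begin

lemma bounded_simple: "simple s \<Longrightarrow> fa_bounded s"
  unfolding simple_def fa_bounded_def
  by (rule exI[of _ "Max (abs ` range s)"]) (auto intro: Max_ge)

lemma bounded_add: "fa_bounded f \<Longrightarrow> fa_bounded g \<Longrightarrow> fa_bounded (\<lambda>x. f x + g x)"
  unfolding fa_bounded_def
proof (elim exE)
  fix B C assume "\<forall>x. \<bar>f x\<bar> \<le> B" "\<forall>x. \<bar>g x\<bar> \<le> C"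
  then show "\<exists>B. \<forall>x. \<bar>f x + g x\<bar> \<le> B"
  proof (intro exI[of _ "B + C"] allI)
    fix x
    have "\<bar>f x + g x\<bar> \<le> \<bar>f x\<bar> + \<bar>g x\<bar>" by (rule abs_triangle_ineq)
    then show "\<bar>f x + g x\<bar> \<le> B + C" using \<open>\<forall>x. \<bar>f x\<bar> \<le> B\<close> \<open>\<forall>x. \<bar>g x\<bar> \<le> C\<close>
      by (smt (verit))
  qed
qed

lemma bounded_scale: "fa_bounded f \<Longrightarrow> fa_bounded (\<lambda>x. c * f x)"
  unfolding fa_bounded_def
proof (elim exE)
  fix B assume "\<forall>x. \<bar>f x\<bar> \<le> B"
  then show "\<exists>B. \<forall>x. \<bar>c * f x\<bar> \<le> B"
    by (intro exI[of _ "\<bar>c\<bar> * B"]) (simp add: abs_mult mult_left_mono)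
qed

lemma approx:
  assumes "fa_bounded f" "e > 0"
  shows "\<exists>s. simple s \<and> (\<forall>x. s x \<le> f x \<and> f x \<le> s x + e)"
proof -
  obtain B where B: "\<And>x. \<bar>f x\<bar> \<le> B" using assms(1) unfolding fa_bounded_def by blast
  define s where "s x = e * of_int \<lfloor>f x / e\<rfloor>" for x
  define M where "M = \<lceil>B / e\<rceil> + 1"
  have 1: "s x \<le> f x" for x
  proof -
    have "of_int \<lfloor>f x / e\<rfloor> \<le> f x / e" by (rule of_int_floor_le)
    then have "e * of_int \<lfloor>f x / e\<rfloor> \<le> e * (f x / e)" using assms(2) by (intro mult_left_mono) auto
    then show ?thesis using assms(2) by (simp add: s_def)
  qed
  have 2: "f x \<le> s x + e" for x
  proof -
    have "f x / e \<le> of_int \<lfloor>f x / e\<rfloor> + 1" by linarith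
    then have "e * (f x / e) \<le> e * (of_int \<lfloor>f x / e\<rfloor> + 1)" using assms(2) by (intro mult_left_mono) auto
    then show ?thesis using assms(2) by (simp add: s_def algebra_simps)
  qed
  have 3: "\<lfloor>f x / e\<rfloor> \<in> {-M..M}" for x
  proof -
    have fx: "f x \<le> B" "- B \<le> f x" using B[of x] by (auto simp: abs_le_iff)
    have fe1: "f x / e \<le> B / e" using divide_right_mono[OF fx(1), of e] assms(2) by simp
    have fe2: "- (B / e) \<le> f x / e" using divide_right_mono[OF fx(2), of e] assms(2) by simp
    have a1: "real_of_int \<lfloor>f x / e\<rfloor> \<le> real_of_int \<lceil>B/e\<rceil>"
      using of_int_floor_le[of "f x/e"] le_of_int_ceiling[of "B/e"] fe1 by linarith
    have a2: "real_of_int (- \<lceil>B/e\<rceil> - 1) < real_of_int \<lfloor>f x / e\<rfloor>"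
    proof -
      have f1: "f x / e < real_of_int \<lfloor>f x / e\<rfloor> + 1" using floor_correct[of "f x / e"] by simp
      show ?thesis using f1 le_of_int_ceiling[of "B/e"] fe2
        by (simp only: of_int_diff of_int_minus of_int_1; linarith)
    qed
    have "\<lfloor>f x / e\<rfloor> \<le> \<lceil>B/e\<rceil>" "- \<lceil>B/e\<rceil> - 1 < \<lfloor>f x / e\<rfloor>"
      using a1 a2 by (simp_all only: of_int_le_iff of_int_less_iff)
    then show ?thesis unfolding M_def by simp
  qed
  have "range s \<subseteq> (\<lambda>k. e * of_int k) ` {-M..M}" using 3 by (auto simp: s_def)
  then have "simple s" unfolding simple_def by (rule finite_subset) simp
  with 1 2 show ?thesis by blast
qed

definition L0 :: "(nat \<Rightarrow> real) \<Rightarrow> real" where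
  "L0 f = (if fa_bounded f then Sup {I s |s. simple s \<and> (\<forall>x. s x \<le> f x)} else 0)"

lemma L0_sandwich:
  assumes "fa_bounded f" "simple s" "simple t" "\<And>x. s x \<le> f x" "\<And>x. f x \<le> t x"
  shows "I s \<le> L0 f \<and> L0 f \<le> I t"
proof -
  let ?S = "{I s |s. simple s \<and> (\<forall>x. s x \<le> f x)}"
  have ub: "y \<le> I t" if y: "y \<in> ?S" for y
  proof -
    obtain s' where s': "y = I s'" "simple s'" "\<forall>x. s' x \<le> f x" using y by blast
    have "\<And>x. s' x \<le> t x" using s'(3) assms(5) order_trans by blast
    then show ?thesis using I_mono[OF s'(2) assms(3)] s'(1) by simp
  qed
  have bdd: "bdd_above ?S" using ub unfolding bdd_above_def by blast
  have ne: "?S \<noteq> {}" using assms(2,4) by blast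
  have "I s \<le> Sup ?S" using bdd assms(2,4) by (intro cSup_upper) auto
  moreover have "Sup ?S \<le> I t" using ne ub by (rule cSup_least)
  ultimately show ?thesis using assms(1) by (simp add: L0_def)
qed

lemma approx2:
  assumes "fa_bounded f" "e > 0"
  shows "\<exists>s. simple s \<and> (\<forall>x. s x \<le> f x \<and> f x \<le> s x + e) \<and> I s \<le> L0 f \<and> L0 f \<le> I s + e"
proof -
  obtain s where s: "simple s" "\<forall>x. s x \<le> f x \<and> f x \<le> s x + e" using approx[OF assms] by blast
  have "I (\<lambda>x. s x + e) = I s + e" using I_add[OF s(1) simple_const] by (simp add: I_const)
  moreover have "I s \<le> L0 f \<and> L0 f \<le> I (\<lambda>x. s x + e)"
    by (rule L0_sandwich[OF assms(1) s(1) simple_add[OF s(1) simple_const]]) (use s in auto)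
  ultimately show ?thesis using s by auto
qed

lemma L0_add:
  assumes "fa_bounded f" "fa_bounded g"
  shows "L0 (\<lambda>x. f x + g x) = L0 f + L0 g"
proof -
  have "\<bar>L0 (\<lambda>x. f x + g x) - (L0 f + L0 g)\<bar> \<le> e" if "e > 0" for e
  proof -
    obtain s where s: "simple s" "\<forall>x. s x \<le> f x \<and> f x \<le> s x + e/4" "I s \<le> L0 f" "L0 f \<le> I s + e/4"
      using approx2[OF assms(1), of "e/4"] \<open>e>0\<close> by auto
    obtain t where t: "simple t" "\<forall>x. t x \<le> g x \<and> g x \<le> t x + e/4" "I t \<le> L0 g" "L0 g \<le> I t + e/4"
      using approx2[OF assms(2), of "e/4"] \<open>e>0\<close> by auto
    have st: "simple (\<lambda>x. s x + t x)" by (rule simple_add[OF s(1) t(1)])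
    have st2: "simple (\<lambda>x. (s x + t x) + e/2)" by (rule simple_add[OF st simple_const])
    have "I (\<lambda>x. s x + t x) \<le> L0 (\<lambda>x. f x + g x) \<and> L0 (\<lambda>x. f x + g x) \<le> I (\<lambda>x. (s x + t x) + e/2)"
    proof (rule L0_sandwich[OF bounded_add[OF assms] st st2])
      fix x
      have "s x \<le> f x" "f x \<le> s x + e/4" "t x \<le> g x" "g x \<le> t x + e/4" using s(2) t(2) by auto
      then show "s x + t x \<le> f x + g x" "f x + g x \<le> s x + t x + e/2" by linarith+
    qed
    moreover have "I (\<lambda>x. s x + t x) = I s + I t" by (rule I_add[OF s(1) t(1)])
    moreover have "I (\<lambda>x. (s x + t x) + e/2) = I s + I t + e/2"
      using I_add[OF st simple_const, of "e/2"] I_add[OF s(1) t(1)] by (simp add: I_const)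
    ultimately show ?thesis using s t by auto
  qed
  then show ?thesis by (intro eq_by_eps) auto
qed

lemma L0_scale:
  assumes "fa_bounded f"
  shows "L0 (\<lambda>x. c * f x) = c * L0 f"
proof -
  have "\<bar>L0 (\<lambda>x. c * f x) - c * L0 f\<bar> \<le> e" if "e > 0" for e
  proof -
    define d where "d = e / (\<bar>c\<bar> + 1)"
    have d: "d > 0" using \<open>e>0\<close> by (simp add: d_def)
    have cd: "\<bar>c\<bar> * d \<le> e" using \<open>e>0\<close> by (simp add: d_def field_simps)
    obtain s where s: "simple s" "\<forall>x. s x \<le> f x \<and> f x \<le> s x + d" "I s \<le> L0 f" "L0 f \<le> I s + d"
      using approx2[OF assms d] by auto
    have cs: "simple (\<lambda>x. c * s x)" using s by (intro simple_scale)
    have cs2: "simple (\<lambda>x. c * s x + c * d)" by (rule simple_add[OF cs simple_const])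
    have Ics: "I (\<lambda>x. c * s x) = c * I s" using s by (intro I_scale)
    have Ics2: "I (\<lambda>x. c * s x + c * d) = c * I s + c * d"
      using I_add[OF cs simple_const, of "c*d"] Ics by (simp add: I_const)
    have bf: "fa_bounded (\<lambda>x. c * f x)" using assms by (rule bounded_scale)
    show ?thesis
    proof (cases "c \<ge> 0")
      case True
      have "\<forall>x. c * s x \<le> c * f x \<and> c * f x \<le> c * s x + c * d"
        using s(2) True by (auto simp: mult_left_mono distrib_left[symmetric])
      then have "I (\<lambda>x. c * s x) \<le> L0 (\<lambda>x. c * f x) \<and> L0 (\<lambda>x. c * f x) \<le> I (\<lambda>x. c * s x + c * d)"
        by (intro L0_sandwich bf cs cs2) auto
      moreover have "c * I s \<le> c * L0 f" "c * L0 f \<le> c * I s + c * d"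
        using s(3,4) True by (auto simp: mult_left_mono distrib_left[symmetric])
      moreover have "\<bar>c\<bar> * d = c * d" using True by simp
      ultimately show ?thesis using Ics Ics2 cd by (simp only: abs_le_iff) linarith
    next
      case False
      have "\<forall>x. c * s x + c * d \<le> c * f x \<and> c * f x \<le> c * s x"
        using s(2) False by (auto simp: mult_left_mono_neg distrib_left[symmetric])
      then have "I (\<lambda>x. c * s x + c * d) \<le> L0 (\<lambda>x. c * f x) \<and> L0 (\<lambda>x. c * f x) \<le> I (\<lambda>x. c * s x)"
        by (intro L0_sandwich bf cs cs2) auto
      moreover have "c * L0 f \<le> c * I s" "c * I s + c * d \<le> c * L0 f"
        using s(3,4) False by (auto simp: mult_left_mono_neg distrib_left[symmetric])
      moreover have "\<bar>c\<bar> * d = - (c * d)" using False by simp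
      ultimately show ?thesis using Ics Ics2 cd by (simp only: abs_le_iff) linarith
    qed
  qed
  then show ?thesis by (intro eq_by_eps) auto
qed

lemma L0_lower:
  assumes "fa_bounded f" "simple s" "\<And>x. s x \<le> f x"
  shows "I s \<le> L0 f"
proof -
  obtain t where t: "simple t" "\<forall>x. t x \<le> f x \<and> f x \<le> t x + 1" using approx[OF assms(1), of 1] by auto
  have "simple (\<lambda>x. t x + 1)" by (rule simple_add[OF t(1) simple_const])
  from L0_sandwich[OF assms(1,2) this] assms(3) t(2) show ?thesis by auto
qed

lemma L0_pos: "fa_bounded f \<Longrightarrow> (\<forall>x. 0 \<le> f x) \<Longrightarrow> 0 \<le> L0 f"
  using L0_lower[of f "\<lambda>x. 0"] I_const[of 0] simple_const by auto

lemma bounded_ind: "fa_bounded (indicator A)"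
  by (rule bounded_simple[OF simple_ind])

lemma L0_ind: "L0 (indicator A) = P A"
  using L0_sandwich[OF bounded_ind simple_ind simple_ind, of A A A] I_ind by auto

lemma L0_unb: "\<not> fa_bounded f \<Longrightarrow> L0 f = 0"
  by (simp add: L0_def)

lemma unique:
  assumes A: "\<And>f g. fa_bounded f \<Longrightarrow> fa_bounded g \<Longrightarrow> L (\<lambda>x. f x + g x) = L f + L g"
    and S: "\<And>c f. fa_bounded f \<Longrightarrow> L (\<lambda>x. c * f x) = c * L f"
    and Pos: "\<And>f. fa_bounded f \<Longrightarrow> (\<forall>x. 0 \<le> f x) \<Longrightarrow> 0 \<le> L f"
    and Ind: "\<And>A. L (indicator A) = P A"
    and U: "\<And>f. \<not> fa_bounded f \<Longrightarrow> L f = 0"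
  shows "L = L0"
proof -
  have b0: "fa_bounded (\<lambda>x. 0)" by (rule bounded_simple[OF simple_const])
  have L0z: "L (\<lambda>x. 0) = 0" using S[OF b0, of 0] by simp
  have Lsum: "fa_bounded (\<lambda>x. \<Sum>y\<in>Y. F y x) \<and> L (\<lambda>x. \<Sum>y\<in>Y. F y x) = (\<Sum>y\<in>Y. L (F y))"
    if "finite Y" "\<forall>y\<in>Y. fa_bounded (F y)" for Y and F :: "real \<Rightarrow> nat \<Rightarrow> real"
    using that
  proof (induction Y rule: finite_induct)
    case empty then show ?case using b0 L0z by simp
  next
    case (insert y Y)
    then have IH: "fa_bounded (\<lambda>x. \<Sum>y\<in>Y. F y x)" "L (\<lambda>x. \<Sum>y\<in>Y. F y x) = (\<Sum>y\<in>Y. L (F y))"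
      and bF: "fa_bounded (F y)" by auto
    have "fa_bounded (\<lambda>x. F y x + (\<Sum>y\<in>Y. F y x))" using bounded_add[OF bF IH(1)] by simp
    moreover have "L (\<lambda>x. F y x + (\<Sum>y\<in>Y. F y x)) = L (F y) + (\<Sum>y\<in>Y. L (F y))"
      using A[OF bF IH(1)] IH(2) by simp
    ultimately show ?case using insert.hyps by simp
  qed
  have Lsimple: "L s = I s" if "simple s" for s
  proof -
    have fr: "finite (range s)" using that by (simp add: simple_def)
    have eq: "s = (\<lambda>x. \<Sum>y\<in>range s. y * indicator (s -` {y}) x)"
    proof
      fix x
      have "(\<Sum>y\<in>range s. y * indicator (s -` {y}) x) = (\<Sum>y\<in>range s. if y = s x then y else 0)"
        by (rule sum.cong) (auto simp: indicator_def)
      also have "\<dots> = s x" using fr by (simp add: sum.delta')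
      finally show "s x = (\<Sum>y\<in>range s. y * indicator (s -` {y}) x)" by simp
    qed
    have bd: "\<forall>y\<in>range s. fa_bounded (\<lambda>x. y * indicator (s -` {y}) x)"
      using bounded_scale[OF bounded_ind] by blast
    have "L s = (\<Sum>y\<in>range s. L (\<lambda>x. y * indicator (s -` {y}) x))"
      using Lsum[OF fr bd] eq by metis
    also have "\<dots> = (\<Sum>y\<in>range s. y * P (s -` {y}))"
      using S[OF bounded_ind] Ind by simp
    finally show ?thesis by (simp add: I_def)
  qed
  have Lmono: "L f \<le> L g" if "fa_bounded f" "fa_bounded g" "\<And>x. f x \<le> g x" for f g
  proof -
    have bm: "fa_bounded (\<lambda>x. -1 * f x)" using bounded_scale[OF that(1)] .
    have "0 \<le> L (\<lambda>x. g x + -1 * f x)" using Pos[OF bounded_add[OF that(2) bm]] that(3) by simp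
    also have "\<dots> = L g - L f" using A[OF that(2) bm] S[OF that(1), of "-1"] by simp
    finally show ?thesis by simp
  qed
  show ?thesis
  proof
    fix f
    show "L f = L0 f"
    proof (cases "fa_bounded f")
      case False then show ?thesis using U L0_unb by simp
    next
      case True
      show ?thesis
      proof (rule eq_by_eps)
        fix e :: real assume "e > 0"
        obtain s where s: "simple s" "\<forall>x. s x \<le> f x \<and> f x \<le> s x + e" "I s \<le> L0 f" "L0 f \<le> I s + e"
          using approx2[OF True \<open>e>0\<close>] by auto
        have se: "simple (\<lambda>x. s x + e)" by (rule simple_add[OF s(1) simple_const])
        have "L s \<le> L f" using Lmono[OF bounded_simple[OF s(1)] True] s(2) by auto
        moreover have "L f \<le> L (\<lambda>x. s x + e)" using Lmono[OF True bounded_simple[OF se]] s(2) by auto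
        moreover have "L (\<lambda>x. s x + e) = I s + e"
          using Lsimple[OF se] I_add[OF s(1) simple_const] I_const by simp
        ultimately show "\<bar>L f - L0 f\<bar> \<le> e" using s(3,4) Lsimple[OF s(1)] by linarith
      qed
    qed
  qed
qed

lemma fa_integral_eq: "fa_integral P = L0"
  unfolding fa_integral_def
proof (rule the_equality)
  show "(\<forall>f g. fa_bounded f \<longrightarrow> fa_bounded g \<longrightarrow> L0 (\<lambda>x. f x + g x) = L0 f + L0 g) \<and>
      (\<forall>c f. fa_bounded f \<longrightarrow> L0 (\<lambda>x. c * f x) = c * L0 f) \<and>
      (\<forall>f. fa_bounded f \<longrightarrow> (\<forall>x. 0 \<le> f x) \<longrightarrow> 0 \<le> L0 f) \<and>
      (\<forall>A. L0 (indicator A) = P A) \<and>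
      (\<forall>f. \<not> fa_bounded f \<longrightarrow> L0 f = 0)"
    using L0_add L0_scale L0_pos L0_ind L0_unb by blast
next
  fix L
  assume "(\<forall>f g. fa_bounded f \<longrightarrow> fa_bounded g \<longrightarrow> L (\<lambda>x. f x + g x) = L f + L g) \<and>
      (\<forall>c f. fa_bounded f \<longrightarrow> L (\<lambda>x. c * f x) = c * L f) \<and>
      (\<forall>f. fa_bounded f \<longrightarrow> (\<forall>x. 0 \<le> f x) \<longrightarrow> 0 \<le> L f) \<and>
      (\<forall>A. L (indicator A) = P A) \<and>
      (\<forall>f. \<not> fa_bounded f \<longrightarrow> L f = 0)"
  then show "L = L0" by (intro unique) auto
qed

end

locale bm = fam +
  assumes shift: "P ((\<lambda>x. x + 1) ` X) = P X"
    and zero: "P {0} = 0"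
begin

lemma L0_mono:
  assumes "fa_bounded f" "fa_bounded g" "\<And>x. f x \<le> g x"
  shows "L0 f \<le> L0 g"
proof -
  have bm: "fa_bounded (\<lambda>x. -1 * f x)" using bounded_scale[OF assms(1)] .
  have "0 \<le> L0 (\<lambda>x. g x + -1 * f x)" using L0_pos[OF bounded_add[OF assms(2) bm]] assms(3) by simp
  also have "\<dots> = L0 g - L0 f" using L0_add[OF assms(2) bm] L0_scale[OF assms(1), of "-1"] by simp
  finally show ?thesis by simp
qed

lemma L0_const: "L0 (\<lambda>x. c) = c"
proof -
  have "(\<lambda>x. c) = (\<lambda>x. c * indicator UNIV x)" by simp
  then show ?thesis using L0_scale[OF bounded_ind, of c UNIV] L0_ind[of UNIV] univ by simp
qed

lemma P_single: "P {k} = 0"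
proof (induction k)
  case 0 then show ?case by (rule zero)
next
  case (Suc k)
  have "{Suc k} = (\<lambda>x. x + 1) ` {k}" by simp
  then show ?case using shift[of "{k}"] Suc by simp
qed

lemma P_finite: "finite F \<Longrightarrow> P F = 0"
proof (induction F rule: finite_induct)
  case empty then show ?case by (rule P_empty)
next
  case (insert x F)
  have "insert x F = {x} \<union> F" by simp
  then show ?case using add[of "{x}" F] insert P_single by simp
qed

lemma P_le1: "0 \<le> P A \<and> P A \<le> 1"
  using nonneg[of A] P_mono[of A UNIV] univ by simp

lemma L0_le_fin:
  assumes "fa_bounded f" "fa_bounded g" "finite F" "\<And>x. x \<notin> F \<Longrightarrow> f x \<le> g x"
  shows "L0 f \<le> L0 g"
proof -
  obtain B where B: "\<And>x. \<bar>f x\<bar> \<le> B" using assms(1) unfolding fa_bounded_def by blast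
  obtain C where C: "\<And>x. \<bar>g x\<bar> \<le> C" using assms(2) unfolding fa_bounded_def by blast
  have bi: "fa_bounded (\<lambda>x. (B + C) * indicator F x)" by (rule bounded_scale[OF bounded_ind])
  have le: "f x \<le> g x + (B + C) * indicator F x" for x
  proof (cases "x \<in> F")
    case True
    then show ?thesis using B[of x] C[of x] by (simp add: abs_le_iff)
  next
    case False
    then show ?thesis using assms(4)[of x] by simp
  qed
  have "L0 f \<le> L0 (\<lambda>x. g x + (B + C) * indicator F x)"
    by (rule L0_mono[OF assms(1) bounded_add[OF assms(2) bi]]) (rule le)
  also have "\<dots> = L0 g + (B + C) * P F"
    using L0_add[OF assms(2) bi] L0_scale[OF bounded_ind, of "B + C" F] L0_ind[of F] by simp
  finally show ?thesis using P_finite[OF assms(3)] by simp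
qed

lemma L0_lim:
  assumes "fa_bounded h" "\<And>e. e > 0 \<Longrightarrow> \<exists>N. \<forall>n\<ge>N. \<bar>h n - c\<bar> \<le> e"
  shows "L0 h = c"
proof (rule eq_by_eps)
  fix e :: real assume "e > 0"
  then obtain N where N: "\<And>n. n \<ge> N \<Longrightarrow> \<bar>h n - c\<bar> \<le> e" using assms(2) by blast
  have bc: "fa_bounded (\<lambda>x. a)" for a by (rule bounded_simple[OF simple_const])
  have Nx: "h x - c \<le> e \<and> c - h x \<le> e" if "x \<notin> {..<N}" for x
    using N[of x] that by (simp add: abs_le_iff not_less)
  have "L0 h \<le> L0 (\<lambda>x. c + e)"
    by (rule L0_le_fin[OF assms(1) bc, of "{..<N}"]) (use Nx in \<open>force+\<close>)
  moreover have "L0 (\<lambda>x. c - e) \<le> L0 h"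
    by (rule L0_le_fin[OF bc assms(1), of "{..<N}"]) (use Nx in \<open>force+\<close>)
  ultimately show "\<bar>L0 h - c\<bar> \<le> e" using L0_const by (simp add: abs_le_iff)
qed

lemma P_class_eq:
  assumes "m > 0"
  shows "r < m \<Longrightarrow> P {w. w mod m = r} = P {w. w mod m = 0}"
proof (induction r)
  case 0 then show ?case by simp
next
  case (Suc r)
  have "{w. w mod m = Suc r} = (\<lambda>x. x + 1) ` {w. w mod m = r}"
  proof
    show "(\<lambda>x. x + 1) ` {w. w mod m = r} \<subseteq> {w. w mod m = Suc r}"
      using Suc.prems by (auto simp: mod_Suc)
    show "{w. w mod m = Suc r} \<subseteq> (\<lambda>x. x + 1) ` {w. w mod m = r}"
    proof
      fix w assume w: "w \<in> {w. w mod m = Suc r}"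
      then have "w \<noteq> 0" by (cases w) auto
      then obtain v where v: "w = Suc v" by (cases w) auto
      then have "v mod m = r" using w by (auto simp: mod_Suc split: if_splits)
      then show "w \<in> (\<lambda>x. x + 1) ` {w. w mod m = r}" using v by auto
    qed
  qed
  then show ?case using shift[of "{w. w mod m = r}"] Suc by simp
qed

lemma P_class:
  assumes "m > 0" "r < m"
  shows "P {w. w mod m = r} = 1 / m"
proof -
  have "UNIV = (\<Union>r\<in>{..<m}. {w. w mod m = r})"
  proof (intro set_eqI iffI)
    fix x :: nat
    have "x mod m \<in> {..<m}" using assms(1) by simp
    then show "x \<in> (\<Union>r\<in>{..<m}. {w. w mod m = r})" by blast
  qed simp
  then have "1 = P (\<Union>r\<in>{..<m}. {w. w mod m = r})" using univ by simp
  also have "\<dots> = (\<Sum>r\<in>{..<m}. P {w. w mod m = r})"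
    by (rule P_UN) (auto simp: disjoint_family_on_def)
  also have "\<dots> = (\<Sum>r\<in>{..<m}. P {w. w mod m = 0})"
    by (rule sum.cong[OF refl]) (rule P_class_eq[OF assms(1)], simp)
  finally have "P {w. w mod m = 0} = 1 / m" using assms(1) by (simp add: field_simps)
  then show ?thesis using P_class_eq[OF assms] by (simp only:)
qed

lemma P_periodic:
  assumes "m > 0" "\<And>w. w \<in> S \<longleftrightarrow> w mod m \<in> S"
  shows "P S = card (S \<inter> {..<m}) / m"
proof -
  have "S = (\<Union>r\<in>S \<inter> {..<m}. {w. w mod m = r})"
  proof
    show "S \<subseteq> (\<Union>r\<in>S \<inter> {..<m}. {w. w mod m = r})"
    proof
      fix w assume "w \<in> S"
      then have "w mod m \<in> S" using assms(2)[of w] by blast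
      then have "w mod m \<in> S \<inter> {..<m}" using assms(1) by simp
      then show "w \<in> (\<Union>r\<in>S \<inter> {..<m}. {w. w mod m = r})" by blast
    qed
    show "(\<Union>r\<in>S \<inter> {..<m}. {w. w mod m = r}) \<subseteq> S" using assms(2) by blast
  qed
  then have "P S = (\<Sum>r\<in>S \<inter> {..<m}. P {w. w mod m = r})"
    using P_UN[of "S \<inter> {..<m}" "\<lambda>r. {w. w mod m = r}"] by (auto simp: disjoint_family_on_def)
  also have "\<dots> = (\<Sum>r\<in>S \<inter> {..<m}. 1 / m)" using P_class[OF assms(1)] by simp
  finally show ?thesis by simp
qed

end

lemma coll_mod:
  assumes "w mod 2^(k+1) = v mod 2^(k+1)"
  shows "collatz w mod 2^k = collatz v mod 2^k"
proof -
  have m2: "w mod 2 = v mod 2"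
    using assms by (metis mod_mod_cancel dvd_power le_add2 add_gr_0 one_less_numeral_iff semiring_norm(76) power_one_right zero_less_one dvd_power_le dvd_refl)
  show ?thesis
  proof (cases "even w")
    case True
    then have ev: "even v" using m2 by (simp add: even_iff_mod_2_eq_zero)
    have "w mod (2 * 2^k) = 2 * (w div 2 mod 2^k) + w mod 2" by (rule mod_mult2_eq)
    moreover have "v mod (2 * 2^k) = 2 * (v div 2 mod 2^k) + v mod 2" by (rule mod_mult2_eq)
    ultimately have "w div 2 mod 2^k = v div 2 mod 2^k" using assms m2 by simp
    then show ?thesis using True ev by (simp add: collatz_def)
  next
    case False
    then have od: "odd v" using m2 by (simp add: even_iff_mod_2_eq_zero)
    have "w mod 2^k = v mod 2^k"
      using assms by (metis mod_mod_cancel le_add1 power_le_dvd dvd_refl)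
    then have "(3 * w + 1) mod 2^k = (3 * v + 1) mod 2^k"
      by (metis mod_add_left_eq mod_mult_right_eq)
    then show ?thesis using False od by (simp add: collatz_def)
  qed
qed

definition per :: "nat \<Rightarrow> nat set \<Rightarrow> bool" where
  "per K S \<longleftrightarrow> (\<forall>w. w \<in> S \<longleftrightarrow> w mod 2^K \<in> S)"

definition Pre :: "nat set \<Rightarrow> nat set" where
  "Pre S = {w. collatz w \<in> S}"

definition E :: "nat set" where "E = {w. even w}"

lemma per_pre: "per K S \<Longrightarrow> per (K+1) (Pre S)"
  unfolding per_def Pre_def
proof (intro allI)
  fix w assume S: "\<forall>w. w \<in> S \<longleftrightarrow> w mod 2^K \<in> S"
  have "collatz w mod 2^K = collatz (w mod 2^(K+1)) mod 2^K"
    by (rule coll_mod) simp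
  then show "w \<in> {w. collatz w \<in> S} \<longleftrightarrow> w mod 2^(K+1) \<in> {w. collatz w \<in> S}"
    using S by (metis mem_Collect_eq)
qed

lemma per_E: "K \<ge> 1 \<Longrightarrow> per K E"
  unfolding per_def E_def
proof (intro allI)
  fix w :: nat assume "K \<ge> 1"
  then have "(2::nat) dvd 2^K" by (simp add: dvd_power)
  then have "w mod 2^K mod 2 = w mod 2" by (rule mod_mod_cancel)
  then show "w \<in> {w. even w} \<longleftrightarrow> w mod 2^K \<in> {w. even w}"
    by (simp add: even_iff_mod_2_eq_zero)
qed

lemma per_int: "per K S \<Longrightarrow> per K T \<Longrightarrow> per K (S \<inter> T)"
  unfolding per_def by blast

lemma per_diff: "per K S \<Longrightarrow> per K T \<Longrightarrow> per K (S - T)"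
  unfolding per_def by blast

lemma cyc: "(collatz ^^ j) 1 = (if j mod 3 = 0 then 1 else if j mod 3 = 1 then 4 else 2)"
proof (induction j)
  case 0 then show ?case by simp
next
  case (Suc j)
  have "j mod 3 = 0 \<or> j mod 3 = 1 \<or> j mod 3 = 2" by auto
  then show ?case using Suc by (auto simp: collatz_def mod_Suc)
qed

lemma inj3:
  fixes v v' :: nat
  assumes "K \<ge> 1" "v < 2^K" "v' < 2^K" "(3 * v + 1) mod 2^K = (3 * v' + 1) mod 2^K"
  shows "v = v'"
proof -
  have "int ((3 * v + 1) mod 2^K) = int ((3 * v' + 1) mod 2^K)" using assms(4) by simp
  then have "(3 * int v + 1) mod 2^K = (3 * int v' + 1) mod 2^K" by (simp add: zmod_int add.commute)
  then have "(2::int)^K dvd (3 * int v + 1) - (3 * int v' + 1)" by (simp add: mod_eq_dvd_iff)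
  then have "(2::int)^K dvd 3 * (int v - int v')" by (simp add: algebra_simps)
  moreover have "coprime ((2::int)^K) 3" by simp
  ultimately have d: "(2::int)^K dvd (int v - int v')" using coprime_dvd_mult_right_iff by blast
  have "int v < 2^K" using assms(2) by (metis of_nat_less_iff of_nat_numeral of_nat_power)
  moreover have "int v' < 2^K" using assms(3) by (metis of_nat_less_iff of_nat_numeral of_nat_power)
  ultimately have "\<bar>int v - int v'\<bar> < 2^K" by linarith
  then have "int v - int v' = 0"
  proof (rule contrapos_pp)
    assume "int v - int v' \<noteq> 0"
    then have "\<bar>(2::int)^K\<bar> \<le> \<bar>int v - int v'\<bar>" using d by (rule dvd_imp_le_int)
    then show "\<not> \<bar>int v - int v'\<bar> < 2^K" by simp
  qed
  then show ?thesis by simp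
qed

definition A :: "nat \<Rightarrow> nat set" where "A n = {w. even ((collatz ^^ n) w)}"

lemma A_suc: "A (Suc n) = Pre (A n)"
  unfolding A_def Pre_def funpow_Suc_right by simp

lemma A0: "A 0 = E"
  by (simp add: A_def E_def)

lemma per_A: "per (n+1) (A n)"
proof (induction n)
  case 0 then show ?case using per_E[of 1] by (simp add: A0)
next
  case (Suc n) then show ?case using per_pre[OF Suc] by (simp add: A_suc)
qed

lemma g_ind1: "(\<lambda>w2. collatz_g w1 w2) = indicator (A w1)"
  by (auto simp: collatz_g_def indicator_def fun_eq_iff A_def)

lemma g_ind2: "(\<lambda>w1. collatz_g w1 w2) = indicator {w1. even ((collatz ^^ w1) w2)}"
  by (auto simp: collatz_g_def indicator_def fun_eq_iff)

context bm
begin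

lemma P_per: "per K S \<Longrightarrow> P S = card (S \<inter> {..<2^K}) / 2^K"
  using P_periodic[of "2^K" S] unfolding per_def by simp

lemma P_E: "P E = 1/2"
proof -
  have "E \<inter> {..<2^1} = {0}" by (auto simp: E_def)
  then show ?thesis using P_per[OF per_E[of 1]] by simp
qed

lemma half:
  assumes "per K S"
  shows "P (Pre S \<inter> E) = P S / 2"
proof -
  have pT: "per (K+1) (Pre S \<inter> E)" using per_int[OF per_pre[OF assms] per_E] by simp
  have "bij_betw (\<lambda>v. 2*v) (S \<inter> {..<2^K}) ((Pre S \<inter> E) \<inter> {..<2^(K+1)})"
    unfolding bij_betw_def
  proof
    show "inj_on (\<lambda>v. 2*v) (S \<inter> {..<2^K})" by (auto simp: inj_on_def)
    show "(\<lambda>v. 2*v) ` (S \<inter> {..<2^K}) = (Pre S \<inter> E) \<inter> {..<2^(K+1)}"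
    proof (intro set_eqI iffI)
      fix w assume "w \<in> (\<lambda>v. 2*v) ` (S \<inter> {..<2^K})"
      then show "w \<in> (Pre S \<inter> E) \<inter> {..<2^(K+1)}" by (auto simp: Pre_def E_def collatz_def)
    next
      fix w assume w: "w \<in> (Pre S \<inter> E) \<inter> {..<2^(K+1)}"
      then have ev: "even w" by (simp add: E_def)
      then have "w = 2 * (w div 2)" by simp
      moreover have "w div 2 \<in> S" using w ev by (simp add: Pre_def collatz_def)
      moreover have "w div 2 < 2^K" using w by auto
      ultimately show "w \<in> (\<lambda>v. 2*v) ` (S \<inter> {..<2^K})" by blast
    qed
  qed
  then have "card (S \<inter> {..<2^K}) = card ((Pre S \<inter> E) \<inter> {..<2^(K+1)})" by (rule bij_betw_same_card)
  then show ?thesis using P_per[OF pT] P_per[OF assms] by simp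
qed

lemma odd_part:
  assumes K: "K \<ge> 1" and S: "per K S"
  shows "P (Pre S - E) = P (S \<inter> E)"
proof -
  define \<phi> where "\<phi> v = (3 * v + 1) mod 2^K" for v :: nat
  have Sm: "x \<in> S \<longleftrightarrow> x mod 2^K \<in> S" for x using S unfolding per_def by blast
  have par: "w mod 2^K mod 2 = w mod 2" for w :: nat
    using K by (simp add: mod_mod_cancel dvd_power)
  have evphi: "even (\<phi> v) \<longleftrightarrow> odd v" for v
  proof -
    have "\<phi> v mod 2 = (3 * v + 1) mod 2" using par[of "3*v+1"] by (simp add: \<phi>_def)
    then show ?thesis by (simp add: even_iff_mod_2_eq_zero) presburger
  qed
  have m3: "(3 * (w mod 2^K) + 1) mod 2^K = (3 * w + 1) mod 2^K" for w :: nat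
    by (metis mod_add_left_eq mod_mult_right_eq)
  have pT: "per K (Pre S - E)"
    unfolding per_def
  proof
    fix w :: nat
    have o: "odd (w mod 2^K) \<longleftrightarrow> odd w" using par[of w] by (simp add: even_iff_mod_2_eq_zero)
    show "w \<in> Pre S - E \<longleftrightarrow> w mod 2^K \<in> Pre S - E"
    proof (cases "odd w")
      case True
      then have "w \<in> Pre S - E \<longleftrightarrow> 3 * w + 1 \<in> S" by (simp add: Pre_def E_def collatz_def)
      moreover have "w mod 2^K \<in> Pre S - E \<longleftrightarrow> 3 * (w mod 2^K) + 1 \<in> S"
        using True o by (simp add: Pre_def E_def collatz_def)
      ultimately show ?thesis using Sm[of "3 * w + 1"] Sm[of "3 * (w mod 2^K) + 1"] m3[of w] by simp
    next
      case False
      then show ?thesis using o by (simp add: E_def)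
    qed
  qed
  have inj: "inj_on \<phi> {..<2^K}"
    unfolding inj_on_def \<phi>_def using inj3[OF K] by blast
  have surj: "\<phi> ` {..<2^K} = {..<2^K}"
    by (rule endo_inj_surj[OF _ _ inj]) (auto simp: \<phi>_def)
  have "bij_betw \<phi> ((Pre S - E) \<inter> {..<2^K}) (S \<inter> E \<inter> {..<2^K})"
    unfolding bij_betw_def
  proof
    show "inj_on \<phi> ((Pre S - E) \<inter> {..<2^K})" by (rule inj_on_subset[OF inj]) auto
    show "\<phi> ` ((Pre S - E) \<inter> {..<2^K}) = S \<inter> E \<inter> {..<2^K}"
    proof (intro set_eqI iffI)
      fix v assume "v \<in> \<phi> ` ((Pre S - E) \<inter> {..<2^K})"
      then obtain w where w: "v = \<phi> w" "w \<in> Pre S - E" "w < 2^K" by auto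
      then have ow: "odd w" by (simp add: E_def)
      then have "3 * w + 1 \<in> S" using w by (simp add: Pre_def collatz_def)
      then have "\<phi> w \<in> S" using Sm[of "3*w+1"] by (simp add: \<phi>_def)
      moreover have "\<phi> w \<in> E" using evphi[of w] ow by (simp add: E_def)
      moreover have "\<phi> w < 2^K" by (simp add: \<phi>_def)
      ultimately show "v \<in> S \<inter> E \<inter> {..<2^K}" using w by simp
    next
      fix v assume v: "v \<in> S \<inter> E \<inter> {..<2^K}"
      then have "v \<in> \<phi> ` {..<2^K}" using surj by simp
      then obtain w where w: "v = \<phi> w" "w < 2^K" by auto
      have ow: "odd w" using evphi[of w] v w by (simp add: E_def)
      have "\<phi> w \<in> S" using v w by simp
      then have "3 * w + 1 \<in> S" using Sm[of "3*w+1"] by (simp add: \<phi>_def)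
      then have "w \<in> Pre S - E" using ow by (simp add: Pre_def E_def collatz_def)
      then show "v \<in> \<phi> ` ((Pre S - E) \<inter> {..<2^K})" using w by blast
    qed
  qed
  then have "card ((Pre S - E) \<inter> {..<2^K}) = card (S \<inter> E \<inter> {..<2^K})" by (rule bij_betw_same_card)
  then show ?thesis using P_per[OF pT] P_per[OF per_int[OF S per_E[OF K]]] by simp
qed

lemma pre_split: "P (Pre S) = P (Pre S \<inter> E) + P (Pre S - E)"
proof -
  have "Pre S = (Pre S \<inter> E) \<union> (Pre S - E)" by blast
  then show ?thesis using add[of "Pre S \<inter> E" "Pre S - E"] by (metis Diff_disjoint Int_Diff inf_commute)
qed

lemma PA: "P (A n \<inter> E) = 1 - P (A n) \<and> P (A n) = 2/3 - (1/6) * (-1/2)^n"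
proof (induction n)
  case 0 then show ?case using P_E by (simp add: A0)
next
  case (Suc n)
  have h: "P (A (Suc n) \<inter> E) = P (A n) / 2" using half[OF per_A[of n]] by (simp add: A_suc)
  have o: "P (A (Suc n)) = P (A n) / 2 + P (A n \<inter> E)"
    using pre_split[of "A n"] half[OF per_A[of n]] odd_part[OF _ per_A[of n]] by (simp add: A_suc)
  show ?case using h o Suc by (simp add: field_simps)
qed

lemma LHS: "L0 (\<lambda>n. P (A n)) = 2/3"
proof (rule L0_lim)
  show "fa_bounded (\<lambda>n. P (A n))" unfolding fa_bounded_def
    using P_le1 by (intro exI[of _ 1]) (simp add: abs_le_iff)
  fix e :: real assume "e > 0"
  obtain N where N: "(1/2::real)^N < e" using real_arch_pow_inv[OF \<open>e>0\<close>, of "1/2"] by auto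
  have "\<bar>P (A n) - 2/3\<bar> \<le> e" if "n \<ge> N" for n
  proof -
    have "\<bar>P (A n) - 2/3\<bar> = (1/6) * (1/2)^n" using PA[of n] by (simp add: power_abs)
    also have "\<dots> \<le> (1/2)^n" by simp
    also have "\<dots> \<le> (1/2)^N" using that by (simp add: power_decreasing)
    finally show ?thesis using N by simp
  qed
  then show "\<exists>N. \<forall>n\<ge>N. \<bar>P (A n) - 2/3\<bar> \<le> e" by blast
qed

lemma RHS_pt:
  assumes "w2 \<ge> 1" "collatz_conjecture"
  shows "P {w1. even ((collatz ^^ w1) w2)} = 2/3"
proof -
  obtain n0 where n0: "(collatz ^^ n0) w2 = 1" using assms unfolding collatz_conjecture_def by blast
  define B where "B = {w1. even ((collatz ^^ w1) w2)}"
  define C where "C = {m::nat. m mod 3 \<noteq> n0 mod 3}"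
  have eq: "indicator B x = (indicator C x :: real)" if "x \<notin> {..<n0}" for x
  proof -
    have le: "n0 \<le> x" using that by simp
    have "(collatz ^^ x) w2 = (collatz ^^ (x - n0)) ((collatz ^^ n0) w2)"
      using le by (metis funpow_add le_add_diff_inverse2 o_apply)
    then have "(collatz ^^ x) w2 = (collatz ^^ (x - n0)) 1" using n0 by simp
    then have c: "(collatz ^^ x) w2 = (if (x - n0) mod 3 = 0 then 1 else if (x - n0) mod 3 = 1 then 4 else 2)"
      using cyc[of "x - n0"] by simp
    have "x \<in> B \<longleftrightarrow> (x - n0) mod 3 \<noteq> 0" by (simp add: B_def c)
    also have "\<dots> \<longleftrightarrow> x \<in> C" using le unfolding C_def mem_Collect_eq by presburger
    finally show ?thesis by (simp add: indicator_def)
  qed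
  have "L0 (indicator B) \<le> L0 (indicator C)"
    by (rule L0_le_fin[OF bounded_ind bounded_ind, of "{..<n0}"]) (use eq in auto)
  moreover have "L0 (indicator C) \<le> L0 (indicator B)"
    by (rule L0_le_fin[OF bounded_ind bounded_ind, of "{..<n0}"]) (use eq in auto)
  ultimately have "P B = P C" using L0_ind by simp
  moreover have "P C = 2/3"
  proof -
    have "C \<inter> {..<3} = {..<3} - {n0 mod 3}" by (auto simp: C_def)
    then have "card (C \<inter> {..<3}) = 2" by simp
    moreover have "\<And>w. w \<in> C \<longleftrightarrow> w mod 3 \<in> C" by (simp add: C_def)
    ultimately show ?thesis using P_periodic[of 3 C] by simp
  qed
  ultimately show ?thesis by (simp add: B_def)
qed

end

theorem theorem5p1:
  assumes "banach_measure P"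
    and "collatz_conjecture"
  shows "fa_integral P (\<lambda>w1. fa_integral P (\<lambda>w2. collatz_g w1 w2))
       = fa_integral P (\<lambda>w2. fa_integral P (\<lambda>w1. collatz_g w1 w2))"
proof -
  interpret bm P
    using assms(1) unfolding banach_measure_def by unfold_locales auto
  have l: "(\<lambda>w1. L0 (\<lambda>w2. collatz_g w1 w2)) = (\<lambda>n. P (A n))"
    by (simp add: g_ind1 L0_ind)
  have r: "(\<lambda>w2. L0 (\<lambda>w1. collatz_g w1 w2)) = (\<lambda>w2. P {w1. even ((collatz ^^ w1) w2)})"
    by (simp add: g_ind2 L0_ind)
  have R: "L0 (\<lambda>w2. P {w1. even ((collatz ^^ w1) w2)}) = 2/3"
  proof (rule L0_lim)
    show "fa_bounded (\<lambda>w2. P {w1. even ((collatz ^^ w1) w2)})" unfolding fa_bounded_def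
      using P_le1 by (intro exI[of _ 1]) (simp add: abs_le_iff)
    fix e :: real assume "e > 0"
    show "\<exists>N. \<forall>n\<ge>N. \<bar>P {w1. even ((collatz ^^ w1) n)} - 2/3\<bar> \<le> e"
    proof (intro exI[of _ 1] allI impI)
      fix n :: nat assume "n \<ge> 1"
      then show "\<bar>P {w1. even ((collatz ^^ w1) n)} - 2/3\<bar> \<le> e"
        using RHS_pt[OF _ assms(2), of n] \<open>e > 0\<close> by simp
    qed
  qed
  show ?thesis using l r R LHS by (simp add: fa_integral_eq)
qed

end
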